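(* Let $\sigma$ be a signature containing $\triangleright$ and let $\mathcal{A}$ be a $\sigma$-algebra that is representable by partial functions. Then for every $a \in \mathcal{A}$, the set ${\downarrow}a = \{b \in \mathcal{A} : b \le a\}$, with least element $0$, greatest element $a$, meet given by $\lhd$ and complementation given by $\overline{b} := b \triangleright a$, is a Boolean algebra. Any representation $\theta$ of $\mathcal{A}$ by partial functions restricts to a representation of the Boolean algebra ${\downarrow}a$ as a field of sets over $\theta(a)$ (i.e. $\theta$ maps ${\downarrow}a$ injectively to subsets of $\theta(a)$, sending $\lhd$ to $\cap$, complement to complement relative to $\theta(a)$, $0$ to $\emptyset$ and $a$ to $\theta(a)$). Moreover, this restricted representation of ${\downarrow}a$ is complete (i.e. preserves all existing meets of nonempty subsets as intersections and all existing joins as unions) if either (1) $\theta$ is a meet-complete representation of $\mathcal{A}$, or (2) $\sigma$ contains $\wedge$ and $\theta$ is a join-complete representation of $\mathcal{A}$.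
   Context: Signatures $\sigma$ are sets of operation symbols drawn from: $\triangleright$ (antidomain restriction, binary), $;$ (composition, binary), $\wedge$ (intersection, binary), $\mathrm{upd}$ (update, binary), $\sqcup$ (preferential union, binary), $\mathsf{D}$ (domain, unary), $\mathsf{A}$ (antidomain, unary). An algebra of partial functions of signature $\sigma$ is a $\sigma$-algebra whose elements are partial functions on a set $X$ (the union of all their domains and ranges), with operations: $f \triangleright g = \{(x,y) \in g : x \notin \mathrm{dom}(f)\}$; $f ; g = \{(x,z) : \exists y\,((x,y)\in f, (y,z) \in g)\}$; $f \wedge g = f \cap g$; $\mathrm{upd}(f,g)(x)$ equals $f(x)$ if $f(x)$ is defined and $g(x)$ undefined, equals $g(x)$ if both are defined, and is undefined otherwise; $(f \sqcup g)(x)$ equals $f(x)$ if defined, else $g(x)$ if defined, else undefined; $\mathsf{D}(f)$ is the identity on $\mathrm{dom}(f)$; $\mathsf{A}(f)$ is the identity on $X \setminus \mathrm{dom}(f)$. A representation of a $\sigma$-algebra $\mathcal{A}$ by partial functions is an isomorphism from $\mathcal{A}$ onto an algebra of partial functions of signature $\sigma$; $\mathcal{A}$ is representable if one exists. In any algebra with $\triangleright$, define $0 := a \triangleright a$ and $a \lhd b := (a \triangleright b) \triangleright b$ (in partial functions: restriction of $b$ to $\mathrm{dom}(a)$), and $a \le b :\iff a \lhd b = a$. For representable algebras $\le$ is a partial order with least element $0$, and every representation $\theta$ satisfies $a \le b \iff \theta(a) \subseteq \theta(b)$. A representation $\theta$ is join complete if for every subset $S$ for which $\bigvee S$ exists,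 $\theta(\bigvee S) = \bigcup \theta[S]$; it is meet complete if for every nonempty subset $S$ for which $\bigwedge S$ exists, $\theta(\bigwedge S) = \bigcap \theta[S]$. *)

theory Defs
  imports Main
begin

datatype opsym = ARes | Comp | Mt | Upd | Pref | Dom | ADom

text \<open>An algebra of (some subset of) the signature.  Only the fields whose
  symbol belongs to the signature sigma are relevant; the others are ignored.\<close>
record 'a palg =
  carrier :: "'a set"
  ares :: "'a \<Rightarrow> 'a \<Rightarrow> 'a"
  comp :: "'a \<Rightarrow> 'a \<Rightarrow> 'a"
  mt   :: "'a \<Rightarrow> 'a \<Rightarrow> 'a"
  upd  :: "'a \<Rightarrow> 'a \<Rightarrow> 'a"
  pref :: "'a \<Rightarrow> 'a \<Rightarrow> 'a"
  dm   :: "'a \<Rightarrow> 'a"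
  adm  :: "'a \<Rightarrow> 'a"

definition closed_alg :: "opsym set \<Rightarrow> 'a palg \<Rightarrow> bool" where
  "closed_alg \<sigma> A \<longleftrightarrow>
     (ARes \<in> \<sigma> \<longrightarrow> (\<forall>a\<in>carrier A. \<forall>b\<in>carrier A. ares A a b \<in> carrier A)) \<and>
     (Comp \<in> \<sigma> \<longrightarrow> (\<forall>a\<in>carrier A. \<forall>b\<in>carrier A. comp A a b \<in> carrier A)) \<and>
     (Mt \<in> \<sigma> \<longrightarrow> (\<forall>a\<in>carrier A. \<forall>b\<in>carrier A. mt A a b \<in> carrier A)) \<and>
     (Upd \<in> \<sigma> \<longrightarrow> (\<forall>a\<in>carrier A. \<forall>b\<in>carrier A. upd A a b \<in> carrier A)) \<and>
     (Pref \<in> \<sigma> \<longrightarrow> (\<forall>a\<in>carrier A. \<forall>b\<in>carrier A. pref A a b \<in> carrier A)) \<and>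
     (Dom \<in> \<sigma> \<longrightarrow> (\<forall>a\<in>carrier A. dm A a \<in> carrier A)) \<and>
     (ADom \<in> \<sigma> \<longrightarrow> (\<forall>a\<in>carrier A. adm A a \<in> carrier A))"

definition pf_ares :: "('x \<times> 'x) set \<Rightarrow> ('x \<times> 'x) set \<Rightarrow> ('x \<times> 'x) set" where
  "pf_ares f g = {(x, y) \<in> g. x \<notin> Domain f}"

definition pf_comp :: "('x \<times> 'x) set \<Rightarrow> ('x \<times> 'x) set \<Rightarrow> ('x \<times> 'x) set" where
  "pf_comp f g = {(x, z). \<exists>y. (x, y) \<in> f \<and> (y, z) \<in> g}"

definition pf_meet :: "('x \<times> 'x) set \<Rightarrow> ('x \<times> 'x) set \<Rightarrow> ('x \<times> 'x) set" where
  "pf_meet f g = f \<inter> g"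

definition pf_upd :: "('x \<times> 'x) set \<Rightarrow> ('x \<times> 'x) set \<Rightarrow> ('x \<times> 'x) set" where
  "pf_upd f g = {(x, y) \<in> f. x \<notin> Domain g} \<union> {(x, y) \<in> g. x \<in> Domain f}"

definition pf_pref :: "('x \<times> 'x) set \<Rightarrow> ('x \<times> 'x) set \<Rightarrow> ('x \<times> 'x) set" where
  "pf_pref f g = f \<union> {(x, y) \<in> g. x \<notin> Domain f}"

definition pf_dom :: "('x \<times> 'x) set \<Rightarrow> ('x \<times> 'x) set" where
  "pf_dom f = Id_on (Domain f)"

definition pf_adom :: "'x set \<Rightarrow> ('x \<times> 'x) set \<Rightarrow> ('x \<times> 'x) set" where
  "pf_adom X f = Id_on (X - Domain f)"

definition base :: "'a palg \<Rightarrow> ('a \<Rightarrow> ('x \<times> 'x) set) \<Rightarrow> 'x set" where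
  "base A \<theta> = (\<Union>a\<in>carrier A. Field (\<theta> a))"

text \<open>theta is a representation of the sigma-algebra A: an isomorphism onto an
  algebra of partial functions (the image is then automatically closed under
  the concrete operations).\<close>
definition is_rep :: "opsym set \<Rightarrow> 'a palg \<Rightarrow> ('a \<Rightarrow> ('x \<times> 'x) set) \<Rightarrow> bool" where
  "is_rep \<sigma> A \<theta> \<longleftrightarrow> closed_alg \<sigma> A \<and> inj_on \<theta> (carrier A) \<and>
     (\<forall>a\<in>carrier A. single_valued (\<theta> a)) \<and>
     (ARes \<in> \<sigma> \<longrightarrow> (\<forall>a\<in>carrier A. \<forall>b\<in>carrier A. \<theta> (ares A a b) = pf_ares (\<theta> a) (\<theta> b))) \<and>
     (Comp \<in> \<sigma> \<longrightarrow> (\<forall>a\<in>carrier A. \<forall>b\<in>carrier A. \<theta> (comp A a b) = pf_comp (\<theta> a) (\<theta> b))) \<and>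
     (Mt \<in> \<sigma> \<longrightarrow> (\<forall>a\<in>carrier A. \<forall>b\<in>carrier A. \<theta> (mt A a b) = pf_meet (\<theta> a) (\<theta> b))) \<and>
     (Upd \<in> \<sigma> \<longrightarrow> (\<forall>a\<in>carrier A. \<forall>b\<in>carrier A. \<theta> (upd A a b) = pf_upd (\<theta> a) (\<theta> b))) \<and>
     (Pref \<in> \<sigma> \<longrightarrow> (\<forall>a\<in>carrier A. \<forall>b\<in>carrier A. \<theta> (pref A a b) = pf_pref (\<theta> a) (\<theta> b))) \<and>
     (Dom \<in> \<sigma> \<longrightarrow> (\<forall>a\<in>carrier A. \<theta> (dm A a) = pf_dom (\<theta> a))) \<and>
     (ADom \<in> \<sigma> \<longrightarrow> (\<forall>a\<in>carrier A. \<theta> (adm A a) = pf_adom (base A \<theta>) (\<theta> a)))"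

definition zero :: "'a palg \<Rightarrow> 'a \<Rightarrow> 'a" where
  "zero A a = ares A a a"

definition lres :: "'a palg \<Rightarrow> 'a \<Rightarrow> 'a \<Rightarrow> 'a" where
  "lres A a b = ares A (ares A a b) b"

definition ale :: "'a palg \<Rightarrow> 'a \<Rightarrow> 'a \<Rightarrow> bool" where
  "ale A a b \<longleftrightarrow> lres A a b = a"

definition down :: "'a palg \<Rightarrow> 'a \<Rightarrow> 'a set" where
  "down A a = {b \<in> carrier A. ale A b a}"

definition is_lub_in :: "'a palg \<Rightarrow> 'a set \<Rightarrow> 'a set \<Rightarrow> 'a \<Rightarrow> bool" where
  "is_lub_in A B S x \<longleftrightarrow> x \<in> B \<and> (\<forall>s\<in>S. ale A s x) \<and>
     (\<forall>y\<in>B. (\<forall>s\<in>S. ale A s y) \<longrightarrow> ale A x y)"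

definition is_glb_in :: "'a palg \<Rightarrow> 'a set \<Rightarrow> 'a set \<Rightarrow> 'a \<Rightarrow> bool" where
  "is_glb_in A B S x \<longleftrightarrow> x \<in> B \<and> (\<forall>s\<in>S. ale A x s) \<and>
     (\<forall>y\<in>B. (\<forall>s\<in>S. ale A y s) \<longrightarrow> ale A y x)"

definition join_complete :: "'a palg \<Rightarrow> ('a \<Rightarrow> ('x \<times> 'x) set) \<Rightarrow> bool" where
  "join_complete A \<theta> \<longleftrightarrow> (\<forall>S x. S \<subseteq> carrier A \<longrightarrow> is_lub_in A (carrier A) S x \<longrightarrow>
      \<theta> x = (\<Union>s\<in>S. \<theta> s))"

definition meet_complete :: "'a palg \<Rightarrow> ('a \<Rightarrow> ('x \<times> 'x) set) \<Rightarrow> bool" where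
  "meet_complete A \<theta> \<longleftrightarrow> (\<forall>S x. S \<subseteq> carrier A \<longrightarrow> S \<noteq> {} \<longrightarrow> is_glb_in A (carrier A) S x \<longrightarrow>
      \<theta> x = (\<Inter>s\<in>S. \<theta> s))"

definition boolean_alg ::
  "'a set \<Rightarrow> ('a \<Rightarrow> 'a \<Rightarrow> 'a) \<Rightarrow> ('a \<Rightarrow> 'a) \<Rightarrow> 'a \<Rightarrow> 'a \<Rightarrow> bool" where
  "boolean_alg B m c z t \<longleftrightarrow>
     (let j = (\<lambda>x y. c (m (c x) (c y))) in
      z \<in> B \<and> t \<in> B \<and>
      (\<forall>x\<in>B. \<forall>y\<in>B. m x y \<in> B) \<and> (\<forall>x\<in>B. c x \<in> B) \<and>
      (\<forall>x\<in>B. \<forall>y\<in>B. \<forall>w\<in>B. m (m x y) w = m x (m y w)) \<and>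
      (\<forall>x\<in>B. \<forall>y\<in>B. \<forall>w\<in>B. j (j x y) w = j x (j y w)) \<and>
      (\<forall>x\<in>B. \<forall>y\<in>B. m x y = m y x) \<and>
      (\<forall>x\<in>B. \<forall>y\<in>B. j x y = j y x) \<and>
      (\<forall>x\<in>B. \<forall>y\<in>B. m x (j x y) = x) \<and>
      (\<forall>x\<in>B. \<forall>y\<in>B. j x (m x y) = x) \<and>
      (\<forall>x\<in>B. \<forall>y\<in>B. \<forall>w\<in>B. m x (j y w) = j (m x y) (m x w)) \<and>
      (\<forall>x\<in>B. m x z = z) \<and> (\<forall>x\<in>B. m x t = x) \<and>
      (\<forall>x\<in>B. m x (c x) = z) \<and> (\<forall>x\<in>B. j x (c x) = t))"

end

theory Submission
  imports Defs
begin

locale repctx =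
  fixes \<sigma> :: "opsym set" and A :: "'a palg" and \<theta> :: "'a \<Rightarrow> ('c \<times> 'c) set"
  assumes AR: "ARes \<in> \<sigma>" and rep: "is_rep \<sigma> A \<theta>"
begin

lemma ares_in: "b \<in> carrier A \<Longrightarrow> c \<in> carrier A \<Longrightarrow> ares A b c \<in> carrier A"
  using rep AR unfolding is_rep_def closed_alg_def by auto

lemma th_ares: "b \<in> carrier A \<Longrightarrow> c \<in> carrier A \<Longrightarrow> \<theta> (ares A b c) = pf_ares (\<theta> b) (\<theta> c)"
  using rep AR unfolding is_rep_def by blast

lemma sv: "b \<in> carrier A \<Longrightarrow> single_valued (\<theta> b)"
  using rep unfolding is_rep_def by blast

lemma inj: assumes "b \<in> carrier A" "c \<in> carrier A" "\<theta> b = \<theta> c" shows "b = c"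
proof -
  have "inj_on \<theta> (carrier A)" using rep unfolding is_rep_def by blast
  then show ?thesis using assms by (meson inj_onD)
qed

lemma th_lres: "b \<in> carrier A \<Longrightarrow> c \<in> carrier A \<Longrightarrow>
   \<theta> (lres A b c) = {(x,y) \<in> \<theta> c. x \<in> Domain (\<theta> b)}"
  unfolding lres_def by (auto simp: th_ares ares_in pf_ares_def)

lemma lres_in: "b \<in> carrier A \<Longrightarrow> c \<in> carrier A \<Longrightarrow> lres A b c \<in> carrier A"
  unfolding lres_def by (simp add: ares_in)

lemma ale_iff: "b \<in> carrier A \<Longrightarrow> c \<in> carrier A \<Longrightarrow> ale A b c \<longleftrightarrow> \<theta> b \<subseteq> \<theta> c"
proof -
  assume b: "b \<in> carrier A" and c: "c \<in> carrier A"
  have "ale A b c \<longleftrightarrow> \<theta> (lres A b c) = \<theta> b"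
    unfolding ale_def using inj[OF lres_in[OF b c] b] by auto
  also have "\<dots> \<longleftrightarrow> \<theta> b \<subseteq> \<theta> c"
  proof
    assume "\<theta> (lres A b c) = \<theta> b" moreover have "\<theta> (lres A b c) \<subseteq> \<theta> c" using th_lres[OF b c] by auto
    ultimately show "\<theta> b \<subseteq> \<theta> c" by simp
  next
    assume s: "\<theta> b \<subseteq> \<theta> c"
    show "\<theta> (lres A b c) = \<theta> b"
    proof (rule set_eqI, rule iffI)
      fix p assume "p \<in> \<theta> (lres A b c)"
      then obtain x y y' where p: "p = (x,y)" "(x,y) \<in> \<theta> c" "(x,y') \<in> \<theta> b"
        using th_lres[OF b c] by auto
      then have "y = y'" using s sv[OF c] unfolding single_valued_def by blast
      then show "p \<in> \<theta> b" using p by simp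
    next
      fix p assume "p \<in> \<theta> b" then show "p \<in> \<theta> (lres A b c)"
        using s th_lres[OF b c] by auto
    qed
  qed
  finally show ?thesis .
qed

context
  fixes a assumes a: "a \<in> carrier A"
begin

lemma down_D: "b \<in> down A a \<Longrightarrow> b \<in> carrier A \<and> \<theta> b \<subseteq> \<theta> a"
  unfolding down_def using ale_iff a by blast

lemma down_I: "b \<in> carrier A \<Longrightarrow> \<theta> b \<subseteq> \<theta> a \<Longrightarrow> b \<in> down A a"
  unfolding down_def using ale_iff a by blast

lemma a_down: "a \<in> down A a" using down_I a by blast

lemma lres_down: "b \<in> down A a \<Longrightarrow> c \<in> down A a \<Longrightarrow> \<theta> (lres A b c) = \<theta> b \<inter> \<theta> c"
proof -
  assume b: "b \<in> down A a" and c: "c \<in> down A a"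
  note bb = down_D[OF b] and cc = down_D[OF c]
  show ?thesis
  proof (rule set_eqI, rule iffI)
    fix p assume "p \<in> \<theta> (lres A b c)"
    then obtain x y y' where p: "p = (x,y)" "(x,y) \<in> \<theta> c" "(x,y') \<in> \<theta> b"
      using th_lres bb cc by auto
    then have "y = y'" using bb cc sv[OF a] unfolding single_valued_def by blast
    then show "p \<in> \<theta> b \<inter> \<theta> c" using p by simp
  next
    fix p assume "p \<in> \<theta> b \<inter> \<theta> c" then show "p \<in> \<theta> (lres A b c)"
      using th_lres bb cc by auto
  qed
qed

lemma lres_in_down: "b \<in> down A a \<Longrightarrow> c \<in> down A a \<Longrightarrow> lres A b c \<in> down A a"
  using lres_down down_D lres_in down_I by (metis inf.coboundedI2)

lemma comp_down: "b \<in> down A a \<Longrightarrow> \<theta> (ares A b a) = \<theta> a - \<theta> b"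
proof -
  assume b: "b \<in> down A a"
  note bb = down_D[OF b]
  show ?thesis
  proof (rule set_eqI, rule iffI)
    fix p assume "p \<in> \<theta> (ares A b a)"
    then show "p \<in> \<theta> a - \<theta> b" using th_ares bb a by (auto simp: pf_ares_def)
  next
    fix p assume p: "p \<in> \<theta> a - \<theta> b"
    obtain x y where xy: "p = (x,y)" by force
    have "x \<notin> Domain (\<theta> b)"
    proof
      assume "x \<in> Domain (\<theta> b)"
      then obtain y' where "(x,y') \<in> \<theta> b" by blast
      then show False using p xy bb sv[OF a] unfolding single_valued_def by blast
    qed
    then show "p \<in> \<theta> (ares A b a)" using p xy th_ares bb a by (auto simp: pf_ares_def)
  qed
qed

lemma comp_in_down: "b \<in> down A a \<Longrightarrow> ares A b a \<in> down A a"
  using comp_down down_D down_I ares_in a by (metis Diff_subset)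

lemma zero_th: "\<theta> (zero A a) = {}"
  unfolding zero_def using th_ares[OF a a] by (auto simp: pf_ares_def)

lemma zero_in_down: "zero A a \<in> down A a"
  unfolding zero_def using ares_in[OF a a] down_I zero_th unfolding zero_def by blast

lemma eq_down: "b \<in> down A a \<Longrightarrow> c \<in> down A a \<Longrightarrow> b = c \<longleftrightarrow> \<theta> b = \<theta> c"
  using inj down_D by blast

lemma boolean: "boolean_alg (down A a) (lres A) (\<lambda>b. ares A b a) (zero A a) a"
  unfolding boolean_alg_def Let_def
  apply (simp add: a_down zero_in_down lres_in_down comp_in_down)
  apply (simp add: eq_down lres_in_down comp_in_down zero_in_down a_down lres_down comp_down zero_th)
  apply (intro conjI ballI)
  apply (auto dest!: down_D)
  done


lemma glb_iff: "B \<subseteq> carrier A \<Longrightarrow> S \<subseteq> carrier A \<Longrightarrow> is_glb_in A B S x \<longleftrightarrow>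
   x \<in> B \<and> (\<forall>s\<in>S. \<theta> x \<subseteq> \<theta> s) \<and> (\<forall>y\<in>B. (\<forall>s\<in>S. \<theta> y \<subseteq> \<theta> s) \<longrightarrow> \<theta> y \<subseteq> \<theta> x)"
  unfolding is_glb_in_def using ale_iff by (smt (verit, ccfv_threshold) subsetD)

lemma lub_iff: "B \<subseteq> carrier A \<Longrightarrow> S \<subseteq> carrier A \<Longrightarrow> is_lub_in A B S x \<longleftrightarrow>
   x \<in> B \<and> (\<forall>s\<in>S. \<theta> s \<subseteq> \<theta> x) \<and> (\<forall>y\<in>B. (\<forall>s\<in>S. \<theta> s \<subseteq> \<theta> y) \<longrightarrow> \<theta> x \<subseteq> \<theta> y)"
  unfolding is_lub_in_def using ale_iff by (smt (verit, ccfv_threshold) subsetD)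

lemma down_sub: "down A a \<subseteq> carrier A" using down_D by blast

lemma mt_facts: "Mt \<in> \<sigma> \<Longrightarrow> y \<in> carrier A \<Longrightarrow> mt A y a \<in> down A a \<and> \<theta> (mt A y a) = \<theta> y \<inter> \<theta> a"
proof -
  assume m: "Mt \<in> \<sigma>" and y: "y \<in> carrier A"
  have c: "mt A y a \<in> carrier A" using rep m y a unfolding is_rep_def closed_alg_def by auto
  have t: "\<theta> (mt A y a) = \<theta> y \<inter> \<theta> a" using rep m y a unfolding is_rep_def pf_meet_def by auto
  show ?thesis using c t down_I by auto
qed

lemma glb_complete:
  assumes mc: "meet_complete A \<theta> \<or> (Mt \<in> \<sigma> \<and> join_complete A \<theta>)"
    and S: "S \<subseteq> down A a" "S \<noteq> {}" and g: "is_glb_in A (down A a) S x"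
  shows "\<theta> x = (\<Inter>s\<in>S. \<theta> s)"
proof -
  have Sc: "S \<subseteq> carrier A" using S down_sub by blast
  have G: "x \<in> down A a" "\<forall>s\<in>S. \<theta> x \<subseteq> \<theta> s"
    "\<forall>y\<in>down A a. (\<forall>s\<in>S. \<theta> y \<subseteq> \<theta> s) \<longrightarrow> \<theta> y \<subseteq> \<theta> x"
    using g glb_iff[OF down_sub Sc] by auto
  obtain s0 where s0: "s0 \<in> S" using S by blast
  have xa: "\<theta> x \<subseteq> \<theta> a" using G(1) down_D by blast
  have Sa: "\<forall>s\<in>S. \<theta> s \<subseteq> \<theta> a" using S down_D by blast
  show ?thesis
  proof (cases "meet_complete A \<theta>")
    case True
    have "is_glb_in A (carrier A) S x"
      unfolding glb_iff[OF order_refl Sc]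
    proof (intro conjI ballI impI)
      show "x \<in> carrier A" using G(1) down_D by blast
      show "\<And>s. s \<in> S \<Longrightarrow> \<theta> x \<subseteq> \<theta> s" using G(2) by blast
      fix y assume y: "y \<in> carrier A" and ys: "\<forall>s\<in>S. \<theta> y \<subseteq> \<theta> s"
      have "y \<in> down A a" using y ys s0 Sa down_I by blast
      then show "\<theta> y \<subseteq> \<theta> x" using G(3) ys by blast
    qed
    then show ?thesis using True S Sc unfolding meet_complete_def by blast
  next
    case False
    then have m: "Mt \<in> \<sigma>" and jc: "join_complete A \<theta>" using mc by auto
    define C where "C = (\<lambda>s. ares A s a) ` S"
    have Cc: "C \<subseteq> carrier A" unfolding C_def using S comp_in_down down_sub by blast
    have xc: "ares A x a \<in> carrier A" using comp_in_down G(1) down_sub by blast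
    have "is_lub_in A (carrier A) C (ares A x a)"
      unfolding lub_iff[OF order_refl Cc]
    proof (intro conjI ballI impI)
      show "ares A x a \<in> carrier A" by (rule xc)
      fix c assume "c \<in> C"
      then obtain s where s: "s \<in> S" "c = ares A s a" unfolding C_def by blast
      moreover have "s \<in> down A a" using s S by blast
      ultimately show "\<theta> c \<subseteq> \<theta> (ares A x a)" using comp_down[of s] comp_down[OF G(1)] G(2) by auto
    next
      fix y assume y: "y \<in> carrier A" and yc: "\<forall>c\<in>C. \<theta> c \<subseteq> \<theta> y"
      have md: "mt A y a \<in> down A a" and mt: "\<theta> (mt A y a) = \<theta> y \<inter> \<theta> a"
        using mt_facts[OF m y] by auto
      have cm: "ares A (mt A y a) a \<in> down A a" using comp_in_down md by blast
      have "\<forall>s\<in>S. \<theta> a - \<theta> s \<subseteq> \<theta> y"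
      proof
        fix s assume s: "s \<in> S"
        then have "s \<in> down A a" using S by blast
        then show "\<theta> a - \<theta> s \<subseteq> \<theta> y" using yc s comp_down[of s] unfolding C_def by auto
      qed
      then have "\<forall>s\<in>S. \<theta> (ares A (mt A y a) a) \<subseteq> \<theta> s"
        using comp_down[OF md] mt by auto
      then have "\<theta> (ares A (mt A y a) a) \<subseteq> \<theta> x" using G(3) cm by blast
      then show "\<theta> (ares A x a) \<subseteq> \<theta> y" using comp_down[OF md] mt comp_down[OF G(1)] by auto
    qed
    then have "\<theta> (ares A x a) = (\<Union>c\<in>C. \<theta> c)" using jc Cc unfolding join_complete_def by blast
    also have "\<dots> = (\<Union>s\<in>S. \<theta> a - \<theta> s)" unfolding C_def using S comp_down by auto
    finally have e: "\<theta> a - \<theta> x = (\<Union>s\<in>S. \<theta> a - \<theta> s)" using comp_down[OF G(1)] by simp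
    show ?thesis
    proof (rule set_eqI, rule iffI)
      fix p assume "p \<in> \<theta> x" then show "p \<in> (\<Inter>s\<in>S. \<theta> s)" using G(2) by blast
    next
      fix p assume p: "p \<in> (\<Inter>s\<in>S. \<theta> s)"
      then have "p \<in> \<theta> a" using s0 Sa by blast
      moreover have "p \<notin> (\<Union>s\<in>S. \<theta> a - \<theta> s)" using p by blast
      ultimately show "p \<in> \<theta> x" using e by blast
    qed
  qed
qed

lemma lub_complete:
  assumes mc: "meet_complete A \<theta> \<or> (Mt \<in> \<sigma> \<and> join_complete A \<theta>)"
    and S: "S \<subseteq> down A a" and g: "is_lub_in A (down A a) S x"
  shows "\<theta> x = (\<Union>s\<in>S. \<theta> s)"
proof -
  have Sc: "S \<subseteq> carrier A" using S down_sub by blast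
  have G: "x \<in> down A a" "\<forall>s\<in>S. \<theta> s \<subseteq> \<theta> x"
    "\<forall>y\<in>down A a. (\<forall>s\<in>S. \<theta> s \<subseteq> \<theta> y) \<longrightarrow> \<theta> x \<subseteq> \<theta> y"
    using g lub_iff[OF down_sub Sc] by auto
  have xa: "\<theta> x \<subseteq> \<theta> a" using G(1) down_D by blast
  have Sa: "\<forall>s\<in>S. \<theta> s \<subseteq> \<theta> a" using S down_D by blast
  show ?thesis
  proof (cases "Mt \<in> \<sigma> \<and> join_complete A \<theta>")
    case True
    then have m: "Mt \<in> \<sigma>" and jc: "join_complete A \<theta>" by auto
    have "is_lub_in A (carrier A) S x"
      unfolding lub_iff[OF order_refl Sc]
    proof (intro conjI ballI impI)
      show "x \<in> carrier A" using G(1) down_D by blast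
      show "\<And>s. s \<in> S \<Longrightarrow> \<theta> s \<subseteq> \<theta> x" using G(2) by blast
      fix y assume y: "y \<in> carrier A" and ys: "\<forall>s\<in>S. \<theta> s \<subseteq> \<theta> y"
      have md: "mt A y a \<in> down A a" and mt: "\<theta> (mt A y a) = \<theta> y \<inter> \<theta> a"
        using mt_facts[OF m y] by auto
      have "\<forall>s\<in>S. \<theta> s \<subseteq> \<theta> (mt A y a)" using ys Sa mt by auto
      then have "\<theta> x \<subseteq> \<theta> (mt A y a)" using G(3) md by blast
      then show "\<theta> x \<subseteq> \<theta> y" using mt by auto
    qed
    then show ?thesis using jc Sc unfolding join_complete_def by blast
  next
    case False
    then have mc: "meet_complete A \<theta>" using mc by auto
    show ?thesis
    proof (cases "S = {}")
      case True
      have "\<theta> x \<subseteq> \<theta> (zero A a)" using G(3) zero_in_down True by blast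
      then show ?thesis using zero_th True by simp
    next
      case Sne: False
      define C where "C = (\<lambda>s. ares A s a) ` S"
      have Cc: "C \<subseteq> carrier A" unfolding C_def using S comp_in_down down_sub by blast
      have Cne: "C \<noteq> {}" unfolding C_def using Sne by blast
      obtain s0 where s0: "s0 \<in> S" using Sne by blast
      have xc: "ares A x a \<in> carrier A" using comp_in_down G(1) down_sub by blast
      have "is_glb_in A (carrier A) C (ares A x a)"
        unfolding glb_iff[OF order_refl Cc]
      proof (intro conjI ballI impI)
        show "ares A x a \<in> carrier A" by (rule xc)
        fix c assume "c \<in> C"
        then obtain s where s: "s \<in> S" "c = ares A s a" unfolding C_def by blast
        moreover have "s \<in> down A a" using s S by blast
        ultimately show "\<theta> (ares A x a) \<subseteq> \<theta> c" using comp_down[of s] comp_down[OF G(1)] G(2) by auto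
      next
        fix y assume y: "y \<in> carrier A" and yc: "\<forall>c\<in>C. \<theta> y \<subseteq> \<theta> c"
        have ys: "\<forall>s\<in>S. \<theta> y \<subseteq> \<theta> a - \<theta> s"
        proof
          fix s assume s: "s \<in> S"
          then have "s \<in> down A a" using S by blast
          then show "\<theta> y \<subseteq> \<theta> a - \<theta> s" using yc s comp_down[of s] unfolding C_def by auto
        qed
        then have ya: "\<theta> y \<subseteq> \<theta> a" using s0 by blast
        have yd: "y \<in> down A a" using down_I y ya by blast
        have cm: "ares A y a \<in> down A a" using comp_in_down yd by blast
        have "\<forall>s\<in>S. \<theta> s \<subseteq> \<theta> (ares A y a)" using comp_down[OF yd] ys Sa by blast
        then have "\<theta> x \<subseteq> \<theta> (ares A y a)" using G(3) cm by blast
        then show "\<theta> y \<subseteq> \<theta> (ares A x a)" using comp_down[OF yd] comp_down[OF G(1)] ya by auto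
      qed
      then have "\<theta> (ares A x a) = (\<Inter>c\<in>C. \<theta> c)" using mc Cc Cne unfolding meet_complete_def by blast
      also have "\<dots> = (\<Inter>s\<in>S. \<theta> a - \<theta> s)" unfolding C_def using S comp_down by auto
      finally have e: "\<theta> a - \<theta> x = (\<Inter>s\<in>S. \<theta> a - \<theta> s)" using comp_down[OF G(1)] by simp
      show ?thesis
      proof (rule set_eqI, rule iffI)
        fix p assume p: "p \<in> \<theta> x"
        then have "p \<in> \<theta> a" using xa by blast
        then have "p \<notin> (\<Inter>s\<in>S. \<theta> a - \<theta> s)" using e p by blast
        then show "p \<in> (\<Union>s\<in>S. \<theta> s)" using \<open>p \<in> \<theta> a\<close> by blast
      next
        fix p assume "p \<in> (\<Union>s\<in>S. \<theta> s)" then show "p \<in> \<theta> x" using G(2) by blast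
      qed
    qed
  qed
qed

end
end

theorem lemma3p3:
  fixes \<sigma> :: "opsym set" and A :: "'a palg" and \<theta>0 :: "'a \<Rightarrow> ('b \<times> 'b) set" and a :: 'a
  assumes "ARes \<in> \<sigma>"
    and "is_rep \<sigma> A \<theta>0"
    and "a \<in> carrier A"
  shows "boolean_alg (down A a) (lres A) (\<lambda>b. ares A b a) (zero A a) a \<and>
         (\<forall>\<theta> :: 'a \<Rightarrow> ('c \<times> 'c) set. is_rep \<sigma> A \<theta> \<longrightarrow>
           inj_on \<theta> (down A a) \<and>
           (\<forall>b\<in>down A a. \<theta> b \<subseteq> \<theta> a) \<and>
           (\<forall>b\<in>down A a. \<forall>c\<in>down A a. \<theta> (lres A b c) = \<theta> b \<inter> \<theta> c) \<and>
           (\<forall>b\<in>down A a. \<theta> (ares A b a) = \<theta> a - \<theta> b) \<and>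
           \<theta> (zero A a) = {} \<and>
           ((meet_complete A \<theta> \<or> (Mt \<in> \<sigma> \<and> join_complete A \<theta>)) \<longrightarrow>
              (\<forall>S x. S \<subseteq> down A a \<longrightarrow> S \<noteq> {} \<longrightarrow> is_glb_in A (down A a) S x \<longrightarrow>
                 \<theta> x = (\<Inter>s\<in>S. \<theta> s)) \<and>
              (\<forall>S x. S \<subseteq> down A a \<longrightarrow> is_lub_in A (down A a) S x \<longrightarrow>
                 \<theta> x = (\<Union>s\<in>S. \<theta> s))))"
proof -
  interpret r0: repctx \<sigma> A \<theta>0 using assms by unfold_locales
  show ?thesis
  proof (intro conjI allI impI)
    show "boolean_alg (down A a) (lres A) (\<lambda>b. ares A b a) (zero A a) a"
      using r0.boolean[OF assms(3)] .
  next
    fix \<theta> :: "'a \<Rightarrow> ('c \<times> 'c) set"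
    assume "is_rep \<sigma> A \<theta>"
    then interpret r: repctx \<sigma> A \<theta> using assms by unfold_locales
    note aa = assms(3)
    show "inj_on \<theta> (down A a)" unfolding inj_on_def using r.eq_down[OF aa] by blast
    show "\<forall>b\<in>down A a. \<theta> b \<subseteq> \<theta> a" using r.down_D[OF aa] by blast
    show "\<forall>b\<in>down A a. \<forall>c\<in>down A a. \<theta> (lres A b c) = \<theta> b \<inter> \<theta> c"
      using r.lres_down[OF aa] by blast
    show "\<forall>b\<in>down A a. \<theta> (ares A b a) = \<theta> a - \<theta> b" using r.comp_down[OF aa] by blast
    show "\<theta> (zero A a) = {}" using r.zero_th[OF aa] .
    fix S x
    assume mc: "meet_complete A \<theta> \<or> Mt \<in> \<sigma> \<and> join_complete A \<theta>"
    {
      assume "S \<subseteq> down A a" "S \<noteq> {}" "is_glb_in A (down A a) S x"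
      then show "\<theta> x = (\<Inter>s\<in>S. \<theta> s)" using r.glb_complete[OF aa mc] by blast
    }
    {
      fix S x
      assume "S \<subseteq> down A a" "is_lub_in A (down A a) S x"
      then show "\<theta> x = (\<Union>s\<in>S. \<theta> s)" using r.lub_complete[OF aa mc] by blast
    }
  qed
qed

end
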